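(* Let $\Sigma=I_d$, $\beta_*\in\mathbb{R}^d$, $\sigma^2\ge0$, $\lambda>0$, and let $\lambda_*>0$ be the solution of $n-\lambda/\lambda_*=\frac{d}{1+\lambda_*}$. Define $$\mathsf{R}_\lambda:=\frac{\lambda_*^2\langle\beta_*,\Sigma(\Sigma+\lambda_*I)^{-2}\beta_*\rangle}{1-n^{-1}\operatorname{Tr}(\Sigma^2(\Sigma+\lambda_*I)^{-2})}+\frac{\sigma^2\operatorname{Tr}(\Sigma^2(\Sigma+\lambda_*I)^{-2})}{n-\operatorname{Tr}(\Sigma^2(\Sigma+\lambda_*I)^{-2})},$$ $$\mathsf{N}_\lambda:=\langle\beta_*,\Sigma^2(\Sigma+\lambda_*I)^{-2}\beta_*\rangle+\frac{\operatorname{Tr}(\Sigma(\Sigma+\lambda_*I)^{-2})}{n}\cdot\frac{\lambda_*^2\langle\beta_*,\Sigma(\Sigma+\lambda_*I)^{-2}\beta_*\rangle}{1-n^{-1}\operatorname{Tr}(\Sigma^2(\Sigma+\lambda_*I)^{-2})}+\frac{\sigma^2\operatorname{Tr}(\Sigma(\Sigma+\lambda_*I)^{-2})}{n-\operatorname{Tr}(\Sigma^2(\Sigma+\lambda_*I)^{-2})}.$$ Then $$\big(\|\beta_*\|_2^2-\mathsf{R}_\lambda-\mathsf{N}_\lambda\big)\big(\|\beta_*\|_2^2+\mathsf{R}_\lambda-\mathsf{N}_\lambda\big)^2d+2\|\beta_*\|_2^2\Big(\big(\|\beta_*\|_2^2+\mathsf{R}_\lambda-\mathsf{N}_\lamb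da\big)^2-4\|\beta_*\|_2^2\mathsf{R}_\lambda\Big)\lambda=2\Big(\big(\mathsf{R}_\lambda-\mathsf{N}_\lambda\big)^2-\|\beta_*\|_2^4\Big)d\sigma^2.$$
   Context: $\mathsf{R}_\lambda$ and $\mathsf{N}_\lambda$ are the deterministic equivalents of the test risk $\mathbb{E}_\varepsilon\|\beta_*-\hat\beta\|_\Sigma^2$ and the squared norm $\mathbb{E}_\varepsilon\|\hat\beta\|_2^2$ of the ridge estimator $\hat\beta=(X^{\top}X+\lambda I)^{-1}X^{\top}y$ in linear regression with $n$ samples, feature covariance $\Sigma$, target $\beta_*$ and noise variance $\sigma^2$; they are defined by the formulas in the claim. *)

theory Defs
  imports "HOL-Analysis.Analysis"
begin

definition res2 :: "real^'d^'d \<Rightarrow> real \<Rightarrow> real^'d^'d" where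
  "res2 Sig ls = matrix_inv (Sig + ls *\<^sub>R mat 1) ** matrix_inv (Sig + ls *\<^sub>R mat 1)"

definition R_lam :: "real^'d^'d \<Rightarrow> real^'d \<Rightarrow> real \<Rightarrow> nat \<Rightarrow> real \<Rightarrow> real" where
  "R_lam Sig b s2 n ls =
     ls\<^sup>2 * (b \<bullet> ((Sig ** res2 Sig ls) *v b))
       / (1 - trace (Sig ** Sig ** res2 Sig ls) / real n)
     + s2 * trace (Sig ** Sig ** res2 Sig ls)
       / (real n - trace (Sig ** Sig ** res2 Sig ls))"

definition N_lam :: "real^'d^'d \<Rightarrow> real^'d \<Rightarrow> real \<Rightarrow> nat \<Rightarrow> real \<Rightarrow> real" where
  "N_lam Sig b s2 n ls =
     b \<bullet> ((Sig ** Sig ** res2 Sig ls) *v b)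
     + trace (Sig ** res2 Sig ls) / real n
       * (ls\<^sup>2 * (b \<bullet> ((Sig ** res2 Sig ls) *v b))
          / (1 - trace (Sig ** Sig ** res2 Sig ls) / real n))
     + s2 * trace (Sig ** res2 Sig ls)
       / (real n - trace (Sig ** Sig ** res2 Sig ls))"

end

theory Submission
  imports Defs
begin

lemma mat_mul_left: "(mat c :: real^'n^'n) ** (M :: real^'m^'n) = c *\<^sub>R M"
proof -
  have "\<And>i j. (\<Sum>k\<in>UNIV. (if i = k then c else 0) * (M $ k $ j)) = c * M $ i $ j"
    by (simp add: if_distrib[of "\<lambda>x. x * _"] cong: if_cong)
  then show ?thesis by (simp add: matrix_matrix_mult_def mat_def vec_eq_iff)
qed

lemma mat_mul_mat: "(mat c :: real^'n^'n) ** mat e = mat (c*e)"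
  by (simp add: mat_mul_left) (simp add: vec_eq_iff mat_def)

lemma matrix_inv_mat:
  assumes "c \<noteq> (0::real)"
  shows "matrix_inv (mat c :: real^'n^'n) = mat (1/c)"
proof -
  have ex: "mat c ** mat (1/c) = (mat 1 :: real^'n^'n) \<and> mat (1/c) ** mat c = (mat 1 :: real^'n^'n)"
    using assms by (simp add: mat_mul_mat)
  have "\<And>A'. (mat c :: real^'n^'n) ** A' = mat 1 \<Longrightarrow> A' = mat (1/c)"
  proof -
    fix A' :: "real^'n^'n" assume "mat c ** A' = mat 1"
    then have "c *\<^sub>R A' = mat 1" by (simp add: mat_mul_left)
    then have "(1/c) *\<^sub>R (c *\<^sub>R A') = (1/c) *\<^sub>R mat 1" by simp
    then show "A' = mat (1/c)" using assms
      by (simp add: vec_eq_iff mat_def)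
  qed
  then show ?thesis unfolding matrix_inv_def using someI[where P="\<lambda>A'. mat c ** A' = mat 1 \<and> A' ** mat c = mat 1", OF ex]
    by blast
qed

lemma trace_mat: "trace (mat c :: real^'n^'n) = real CARD('n) * c"
  by (simp add: trace_def mat_def)

lemma inner_mat: "(b::real^'n) \<bullet> (mat c *v b) = c * (norm b)\<^sup>2"
proof -
  have "\<And>i. (\<Sum>j\<in>UNIV. (if i = j then c else 0) * (b $ j)) = c * b $ i"
    by (simp add: if_distrib[of "\<lambda>x. x * _"] cong: if_cong)
  then show ?thesis
    by (simp add: mat_def matrix_vector_mult_def inner_vec_def power2_norm_eq_inner sum_distrib_left mult_ac)
qed

lemma Lhelp:
  fixes a B t d n s D R :: real
  assumes a0: "a > 0" and Dp: "D > 0" and Rf: "R = (t^2*B*n + s*d)/D"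
  shows "(2*B*t/a - 2*R) * (2*B*t/a)\<^sup>2 * d + 2*B*((2*B*t/a)\<^sup>2 - 4*B*R) * (t*(n*a - d)/a)
     = 8*B^2*t/(a^3*D) * (t*d*(B*t*D - a*(t^2*B*n+s*d)) + (n*a-d)*(B*t^2*D - a^2*(t^2*B*n+s*d)))"
  unfolding Rf using Dp a0 by (simp add: field_simps) algebra

lemma alg:
  fixes t B d n s lam :: real
  assumes t: "t > 0" and lam: "lam > 0" and eq: "n - lam / t = d / (1 + t)" and d: "d \<ge> 0"
  defines "R \<equiv> t\<^sup>2 * (B / (1+t)\<^sup>2) / (1 - (d / (1+t)\<^sup>2) / n) + s * (d / (1+t)\<^sup>2) / (n - d / (1+t)\<^sup>2)"
  defines "N \<equiv> B / (1+t)\<^sup>2 + (d / (1+t)\<^sup>2) / n * (t\<^sup>2 * (B / (1+t)\<^sup>2) / (1 - (d / (1+t)\<^sup>2) / n)) + s * (d / (1+t)\<^sup>2) / (n - d / (1+t)\<^sup>2)"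
  shows "(B - R - N) * (B + R - N)\<^sup>2 * d + 2 * B * ((B + R - N)\<^sup>2 - 4 * B * R) * lam
           = 2 * ((R - N)\<^sup>2 - B\<^sup>2) * d * s"
proof -
  have lam': "lam = t * (n - d/(1+t))" using eq t by (simp add: field_simps)
  have "n > d/(1+t)" using eq lam t by (smt (verit) divide_pos_pos)
  then have h1: "n*(1+t) > d" using t by (simp add: field_simps)
  then have n: "n > 0" using d t by (smt (verit) mult_nonpos_nonneg)
  have "n*(1+t)^2 \<ge> n*(1+t)" using n t by (simp add: power2_eq_square)
  then have D: "n * (1+t)^2 - d > 0" using h1 by linarith
  have D2: "n - d/(1+t)^2 \<noteq> 0" "1 - d/(1+t)^2/n \<noteq> 0" using D n t by (auto simp: field_simps)
  define D where "D = n * (1+t)^2 - d"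
  have e1: "n - d/(1+t)^2 = D/(1+t)^2" unfolding D_def using t by (simp add: field_simps)
  have e2: "1 - (d/(1+t)^2)/n = D/((1+t)^2*n)" unfolding D_def using t n by (simp add: field_simps)
  have Dp: "D > 0" using D D_def by simp
  have Rf: "R = (t^2*B*n + s*d)/D" unfolding R_def e1 e2 using Dp n t by (simp add: field_simps)
  have Nf: "N = (B*D + d*t^2*B + s*d*(1+t)^2)/((1+t)^2*D)" unfolding N_def e1 e2 using Dp n t
    by (simp add: field_simps)
  have RN: "R - N = B*(t-1)/(1+t)" unfolding Rf Nf using Dp t
    by (simp add: field_simps) (simp add: D_def algebra_simps power2_eq_square)
  have l2: "lam = t*(n*(1+t) - d)/(1+t)" using lam' t by (simp add: field_simps)
  have BRN: "B + R - N = 2*B*t/(1+t)" using RN t by (simp add: field_simps)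
  have BmRN: "B - R - N = B - 2*R + B*(t-1)/(1+t)" using RN by simp
  have a0: "1 + t > 0" using t by simp
  have key: "t*d*(B*t*D - (1+t)*(t^2*B*n+s*d)) + (n*(1+t)-d)*(B*t^2*D - (1+t)^2*(t^2*B*n+s*d)) = - (s*d*(1+t)*D)"
    unfolding D_def by algebra
  have L: "(2*B*t/(1+t) - 2*R) * (2*B*t/(1+t))\<^sup>2 * d + 2*B*((2*B*t/(1+t))\<^sup>2 - 4*B*R) * (t*(n*(1+t) - d)/(1+t))
     = 8*B^2*t/((1+t)^3*D) * (t*d*(B*t*D - (1+t)*(t^2*B*n+s*d)) + (n*(1+t)-d)*(B*t^2*D - (1+t)^2*(t^2*B*n+s*d)))"
    by (rule Lhelp[OF a0 Dp Rf])
  have Rr: "2 * ((B*(t-1)/(1+t))\<^sup>2 - B\<^sup>2) * d * s = 8*B^2*t/((1+t)^3*D) * (- (s*d*(1+t)*D))"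
    using Dp a0 by (simp add: field_simps) algebra
  have BmRN': "B - R - N = 2*B*t/(1+t) - 2*R" unfolding BmRN using a0 by (simp add: field_simps)
  show ?thesis unfolding BRN BmRN' RN l2 L Rr key ..
qed

theorem proposition12:
  fixes Sig :: "real^'d^'d" and b :: "real^'d"
    and s2 lam ls :: real and n :: nat
  assumes "Sig = mat 1"
    and "s2 \<ge> 0"
    and "lam > 0"
    and "ls > 0"
    and "real n - lam / ls = real CARD('d) / (1 + ls)"
  shows "(let d = real CARD('d); B = (norm b)\<^sup>2;
              R = R_lam Sig b s2 n ls; N = N_lam Sig b s2 n ls
          in (B - R - N) * (B + R - N)\<^sup>2 * d
             + 2 * B * ((B + R - N)\<^sup>2 - 4 * B * R) * lam
           = 2 * ((R - N)\<^sup>2 - B\<^sup>2) * d * s2)"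
proof -
  have r: "res2 Sig ls = mat (1/(1+ls)^2)"
  proof -
    have "Sig + ls *\<^sub>R mat 1 = mat (1+ls)" using assms(1) by (simp add: vec_eq_iff mat_def)
    then show ?thesis using assms(4) unfolding res2_def
      by (simp add: matrix_inv_mat mat_mul_mat power2_eq_square)
  qed
  have s1: "Sig ** res2 Sig ls = mat (1/(1+ls)^2)" using r assms(1) by (simp add: mat_mul_mat)
  have s2': "Sig ** Sig ** res2 Sig ls = mat (1/(1+ls)^2)" using r assms(1) by (simp add: mat_mul_mat)
  show ?thesis
    unfolding Let_def R_lam_def N_lam_def s1 s2' trace_mat inner_mat
    using alg[OF assms(4) assms(3) assms(5), of "(norm b)\<^sup>2" s2]
    by (simp add: divide_inverse mult_ac)
qed

end
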